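(* Let $P$ be a distribution on $\mathcal{X}$, $R>0$, $K>0$. Then \[ E_c(P,R,K)=\min\Big\{\sup_{0\le\rho<1}\{E_0(-\rho,0,P)+\rho R\},\ \sup_{0\le\rho<1}\{E_0(-\rho,-\rho,P)+\rho(R+K)\}\Big\}, \] where \[ E_c(P,R,K)=\min_{TV}\Big\{D(TV\|PW)+\big|R-A_{TV}-|B_{TV}-K|^{+}\big|^{+}\Big\},\qquad E_0(\rho,\eta,P)=-\log\sum_y\Big[\sum_x P(x)W^{\frac{1+\eta}{1+\rho}}(y|x)\Big]^{1+\rho}. \]
   Context: $\mathcal{X},\mathcal{Y}$ are finite alphabets and $W(y|x)$ is a conditional distribution on $\mathcal{Y}$ given $\mathcal{X}$. Logs are natural. $TV$ is a joint distribution on $\mathcal{Y}\times\mathcal{X}$ with $\mathcal{Y}$-marginal $T$ and conditional $V(x|y)$, minimized over all such distributions; $PW$ is $P(x)W(y|x)$; $D(TV\|PW)=\sum T(y)V(x|y)\log\frac{T(y)V(x|y)}{P(x)W(y|x)}$; $A_{TV}=\sum T(y)V(x|y)\log\frac{V(x|y)}{P(x)}$; $B_{TV}=\mathbb{E}_{TV}[-\log W(Y|X)]$; $|t|^{+}=\max\{0,t\}$. *)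

theory Defs
  imports Complex_Main
begin

text \<open>Channel W(y|x) is represented as W x y; a joint distribution TV on Y x X as Q y x.\<close>

definition channel :: "('x::finite \<Rightarrow> 'y::finite \<Rightarrow> real) \<Rightarrow> bool" where
  "channel W \<longleftrightarrow> (\<forall>x y. W x y \<ge> 0) \<and> (\<forall>x. (\<Sum>y\<in>UNIV. W x y) = 1)"

definition distr :: "('x::finite \<Rightarrow> real) \<Rightarrow> bool" where
  "distr P \<longleftrightarrow> (\<forall>x. P x \<ge> 0) \<and> (\<Sum>x\<in>UNIV. P x) = 1"

definition joint_distr :: "('y::finite \<Rightarrow> 'x::finite \<Rightarrow> real) \<Rightarrow> bool" where
  "joint_distr Q \<longleftrightarrow> (\<forall>y x. Q y x \<ge> 0) \<and> (\<Sum>y\<in>UNIV. \<Sum>x\<in>UNIV. Q y x) = 1"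

definition marg :: "('y::finite \<Rightarrow> 'x::finite \<Rightarrow> real) \<Rightarrow> 'y \<Rightarrow> real" where
  "marg Q y = (\<Sum>x\<in>UNIV. Q y x)"

definition divD :: "('x::finite \<Rightarrow> 'y::finite \<Rightarrow> real) \<Rightarrow> ('x \<Rightarrow> real) \<Rightarrow> ('y \<Rightarrow> 'x \<Rightarrow> real) \<Rightarrow> real" where
  "divD W P Q = (\<Sum>y\<in>UNIV. \<Sum>x\<in>UNIV. if Q y x = 0 then 0 else Q y x * ln (Q y x / (P x * W x y)))"

text \<open>A_{TV} = sum T(y)V(x|y) log (V(x|y)/P(x)), where V(x|y) = Q y x / T y.\<close>
definition A_TV :: "('x::finite \<Rightarrow> real) \<Rightarrow> ('y::finite \<Rightarrow> 'x \<Rightarrow> real) \<Rightarrow> real" where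
  "A_TV P Q = (\<Sum>y\<in>UNIV. \<Sum>x\<in>UNIV. if Q y x = 0 then 0 else Q y x * ln ((Q y x / marg Q y) / P x))"

definition B_TV :: "('x::finite \<Rightarrow> 'y::finite \<Rightarrow> real) \<Rightarrow> ('y \<Rightarrow> 'x \<Rightarrow> real) \<Rightarrow> real" where
  "B_TV W Q = (\<Sum>y\<in>UNIV. \<Sum>x\<in>UNIV. if Q y x = 0 then 0 else Q y x * (- ln (W x y)))"

definition pos_part :: "real \<Rightarrow> real" where
  "pos_part t = max 0 t"

text \<open>E_c(P,R,K). Joint distributions not absolutely continuous w.r.t. PW give D = +infinity
  and thus never attain the minimum; we minimize over the remaining ones (nonempty: PW itself).\<close>
definition Ec :: "('x::finite \<Rightarrow> 'y::finite \<Rightarrow> real) \<Rightarrow> ('x \<Rightarrow> real) \<Rightarrow> real \<Rightarrow> real \<Rightarrow> real" where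
  "Ec W P R K = (INF Q \<in> {Q. joint_distr Q \<and> (\<forall>y x. Q y x > 0 \<longrightarrow> P x * W x y > 0)}.
      divD W P Q + pos_part (R - A_TV P Q - pos_part (B_TV W Q - K)))"

definition E0 :: "('x::finite \<Rightarrow> 'y::finite \<Rightarrow> real) \<Rightarrow> real \<Rightarrow> real \<Rightarrow> ('x \<Rightarrow> real) \<Rightarrow> real" where
  "E0 W \<rho> \<eta> P = - ln (\<Sum>y\<in>UNIV. (\<Sum>x\<in>UNIV. P x * W x y powr ((1 + \<eta>) / (1 + \<rho>))) powr (1 + \<rho>))"

end

theory Submission
  imports Defs
begin

lemma log_sum:
  fixes p q :: "'a \<Rightarrow> real"
  assumes fin: "finite S" and p0: "\<forall>x\<in>S. p x \<ge> 0" and q0: "\<forall>x\<in>S. q x \<ge> 0"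
    and pq: "\<forall>x\<in>S. p x > 0 \<longrightarrow> q x > 0" and s0: "sum p S > 0"
  shows "sum p S * ln (sum p S / sum q S) \<le> (\<Sum>x\<in>S. if p x = 0 then 0 else p x * ln (p x / q x))"
proof -
  define s where "s = sum p S"
  define Qs where "Qs = sum q S"
  obtain x0 where x0: "x0 \<in> S" "p x0 > 0"
  proof (rule ccontr)
    assume "\<not> thesis"
    then have "\<forall>x\<in>S. p x = 0" using p0 that by force
    then have "sum p S = 0" by simp
    then show False using s0 by simp
  qed
  have "q x0 \<le> Qs" unfolding Qs_def by (rule member_le_sum) (use x0 q0 fin in auto)
  then have Qs0: "Qs > 0" using pq x0 by force
  have s0': "s > 0" using s0 s_def by simp
  have trm: "- (if p x = 0 then 0 else p x * ln (p x / q x)) \<le> q x * s / Qs - p x + p x * ln (Qs / s)"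
    if x: "x \<in> S" for x
  proof (cases "p x = 0")
    case True
    then show ?thesis using q0 x Qs0 s0' by simp
  next
    case False
    then have px: "p x > 0" using p0 x by force
    then have qx: "q x > 0" using pq x by auto
    define t where "t = q x * s / (p x * Qs)"
    have t0: "t > 0" unfolding t_def using px qx s0' Qs0 by simp
    have "ln t \<le> t - 1" using ln_le_minus_one t0 by simp
    have eq: "ln (q x / p x) = ln t + ln (Qs / s)"
    proof -
      have "q x / p x = t * (Qs / s)" unfolding t_def using px qx s0' Qs0 by (simp add: field_simps)
      then show ?thesis using t0 s0' Qs0 ln_mult[of t "Qs / s"] by simp
    qed
    have "ln (p x / q x) = - ln (q x / p x)" using px qx by (simp add: ln_div)
    then have l2: "ln (p x / q x) = - (ln t + ln (Qs / s))" using eq by simp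
    have "- (p x * ln (p x / q x)) = p x * ln t + p x * ln (Qs / s)" unfolding l2 by (simp add: ring_distribs)
    also have "\<dots> \<le> p x * (t - 1) + p x * ln (Qs / s)"
      using \<open>ln t \<le> t - 1\<close> px by (simp add: mult_left_mono)
    also have "p x * (t - 1) = q x * s / Qs - p x" unfolding t_def using px by (simp add: field_simps)
    finally show ?thesis using False by simp
  qed
  have "- (\<Sum>x\<in>S. if p x = 0 then 0 else p x * ln (p x / q x)) = (\<Sum>x\<in>S. - (if p x = 0 then 0 else p x * ln (p x / q x)))"
    by (simp add: sum_negf)
  also have "\<dots> \<le> (\<Sum>x\<in>S. q x * s / Qs - p x + p x * ln (Qs / s))"
    by (rule sum_mono) (use trm in auto)
  also have "\<dots> = Qs * s / Qs - s + s * ln (Qs / s)"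
    by (simp add: sum.distrib sum_subtractf sum_divide_distrib[symmetric] sum_distrib_right[symmetric] Qs_def s_def)
  also have "\<dots> = - (s * ln (s / Qs))" using Qs0 s0' by (simp add: ln_div algebra_simps)
  finally show ?thesis unfolding s_def Qs_def by simp
qed

definition adm :: "('x::finite \<Rightarrow> 'y::finite \<Rightarrow> real) \<Rightarrow> ('x \<Rightarrow> real) \<Rightarrow> ('y \<Rightarrow> 'x \<Rightarrow> real) \<Rightarrow> bool" where
  "adm W P Q \<longleftrightarrow> joint_distr Q \<and> (\<forall>y x. Q y x > 0 \<longrightarrow> P x * W x y > 0)"

definition uu :: "('x::finite \<Rightarrow> 'y::finite \<Rightarrow> real) \<Rightarrow> ('x \<Rightarrow> real) \<Rightarrow> real \<Rightarrow> 'x \<Rightarrow> 'y \<Rightarrow> real" where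
  "uu W P a x y = P x * W x y powr a"

definition gg :: "('x::finite \<Rightarrow> 'y::finite \<Rightarrow> real) \<Rightarrow> ('x \<Rightarrow> real) \<Rightarrow> real \<Rightarrow> 'y \<Rightarrow> real" where
  "gg W P a y = (\<Sum>x\<in>UNIV. uu W P a x y)"

definition ZZ :: "('x::finite \<Rightarrow> 'y::finite \<Rightarrow> real) \<Rightarrow> ('x \<Rightarrow> real) \<Rightarrow> real \<Rightarrow> real \<Rightarrow> real" where
  "ZZ W P a c = (\<Sum>y\<in>UNIV. gg W P a y powr c)"

definition Qt :: "('x::finite \<Rightarrow> 'y::finite \<Rightarrow> real) \<Rightarrow> ('x \<Rightarrow> real) \<Rightarrow> real \<Rightarrow> real \<Rightarrow> 'y \<Rightarrow> 'x \<Rightarrow> real" where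
  "Qt W P a c y x = (gg W P a y powr c / ZZ W P a c) * (uu W P a x y / gg W P a y)"

context
  fixes W :: "'x::finite \<Rightarrow> 'y::finite \<Rightarrow> real" and P :: "'x \<Rightarrow> real"
  assumes chW: "channel W" and dP: "distr P"
begin

lemma W0: "W x y \<ge> 0" using chW unfolding channel_def by auto
lemma P0: "P x \<ge> 0" using dP unfolding distr_def by auto
lemma W1: "W x y \<le> 1"
proof -
  have "W x y \<le> (\<Sum>y\<in>UNIV. W x y)" by (rule member_le_sum) (auto simp: W0)
  then show ?thesis using chW unfolding channel_def by auto
qed
lemma uu0: "uu W P a x y \<ge> 0" unfolding uu_def using W0 P0 by simp
lemma gg0: "gg W P a y \<ge> 0" unfolding gg_def using uu0 by (simp add: sum_nonneg)
lemma uu_pos: "P x * W x y > 0 \<Longrightarrow> uu W P a x y > 0"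
  unfolding uu_def using W0[of x y] P0[of x] by (auto simp: zero_less_mult_iff)
lemma uu_le_gg: "uu W P a x y \<le> gg W P a y"
  unfolding gg_def by (rule member_le_sum) (auto simp: uu0)
lemma gg_pos: "P x * W x y > 0 \<Longrightarrow> gg W P a y > 0"
  using uu_pos uu_le_gg by (meson less_le_trans)

lemma adm_facts:
  assumes "adm W P Q"
  shows "Q y x \<ge> 0" and "Q y x \<noteq> 0 \<Longrightarrow> Q y x > 0 \<and> P x > 0 \<and> W x y > 0 \<and> marg Q y > 0"
    and "marg Q y \<ge> Q y x" and "marg Q y \<ge> 0"
    and "(\<Sum>y\<in>UNIV. marg Q y) = 1"
proof -
  show q0: "Q y x \<ge> 0" using assms unfolding adm_def joint_distr_def by auto
  show m: "marg Q y \<ge> Q y x" unfolding marg_def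
    by (rule member_le_sum) (use assms in \<open>auto simp: adm_def joint_distr_def\<close>)
  show "marg Q y \<ge> 0" using q0 m by linarith
  show "(\<Sum>y\<in>UNIV. marg Q y) = 1" using assms unfolding adm_def joint_distr_def marg_def by auto
  assume "Q y x \<noteq> 0"
  then have qp: "Q y x > 0" using q0 by simp
  then have "P x * W x y > 0" using assms unfolding adm_def by auto
  then have "P x > 0 \<and> W x y > 0" using W0[of x y] P0[of x] by (auto simp: zero_less_mult_iff)
  then show "Q y x > 0 \<and> P x > 0 \<and> W x y > 0 \<and> marg Q y > 0" using qp m by auto
qed

lemma comb:
  assumes Q: "adm W P Q" and ae: "a * (1 - \<rho>) = 1 + \<eta>"
  shows "divD W P Q - \<rho> * A_TV P Q + \<eta> * B_TV W Q =
    (\<Sum>y\<in>UNIV. \<Sum>x\<in>UNIV. if Q y x = 0 then 0 else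
       Q y x * (ln (marg Q y) + (1 - \<rho>) * ln ((Q y x / marg Q y) / uu W P a x y)))"
proof -
  have eta: "\<eta> = a * (1 - \<rho>) - 1" using ae by simp
  have "divD W P Q - \<rho> * A_TV P Q + \<eta> * B_TV W Q =
    (\<Sum>y\<in>UNIV. \<Sum>x\<in>UNIV. (if Q y x = 0 then 0 else Q y x * ln (Q y x / (P x * W x y)))
       - \<rho> * (if Q y x = 0 then 0 else Q y x * ln ((Q y x / marg Q y) / P x))
       + \<eta> * (if Q y x = 0 then 0 else Q y x * (- ln (W x y))))"
    unfolding divD_def A_TV_def B_TV_def
    by (simp add: sum.distrib sum_subtractf sum_distrib_left)
  also have "\<dots> = (\<Sum>y\<in>UNIV. \<Sum>x\<in>UNIV. if Q y x = 0 then 0 else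
       Q y x * (ln (marg Q y) + (1 - \<rho>) * ln ((Q y x / marg Q y) / uu W P a x y)))"
  proof (intro sum.cong refl)
    fix y x
    show "(if Q y x = 0 then 0 else Q y x * ln (Q y x / (P x * W x y)))
       - \<rho> * (if Q y x = 0 then 0 else Q y x * ln ((Q y x / marg Q y) / P x))
       + \<eta> * (if Q y x = 0 then 0 else Q y x * (- ln (W x y))) =
      (if Q y x = 0 then 0 else
       Q y x * (ln (marg Q y) + (1 - \<rho>) * ln ((Q y x / marg Q y) / uu W P a x y)))"
    proof (cases "Q y x = 0")
      case True then show ?thesis by simp
    next
      case False
      then have f: "Q y x > 0" "P x > 0" "W x y > 0" "marg Q y > 0" using adm_facts(2)[OF Q] by auto
      have l1: "ln (Q y x / (P x * W x y)) = ln (Q y x) - ln (P x) - ln (W x y)"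
        using f by (simp add: ln_div ln_mult)
      have l2: "ln ((Q y x / marg Q y) / P x) = ln (Q y x) - ln (marg Q y) - ln (P x)"
        using f by (simp add: ln_div ln_mult)
      have l3: "ln ((Q y x / marg Q y) / uu W P a x y) = ln (Q y x) - ln (marg Q y) - ln (P x) - a * ln (W x y)"
        using f by (simp add: ln_div ln_mult uu_def ln_powr)
      show ?thesis using False unfolding l1 l2 l3 eta by (simp add: algebra_simps)
    qed
  qed
  finally show ?thesis .
qed

lemma gibbs_bound:
  assumes Q: "adm W P Q" and ae: "a * (1 - \<rho>) = 1 + \<eta>" and r1: "\<rho> < 1"
  shows "- ln (ZZ W P a (1 - \<rho>)) \<le> divD W P Q - \<rho> * A_TV P Q + \<eta> * B_TV W Q"
proof -
  define c where "c = 1 - \<rho>"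
  have c0: "c > 0" using r1 c_def by simp
  let ?T = "marg Q"
  let ?g = "gg W P a"
  have row: "(if ?T y = 0 then 0 else ?T y * ln (?T y / (?g y powr c))) \<le>
     (\<Sum>x\<in>UNIV. if Q y x = 0 then 0 else
       Q y x * (ln (?T y) + c * ln ((Q y x / ?T y) / uu W P a x y)))" for y
  proof (cases "?T y = 0")
    case True
    then have "\<forall>x. Q y x = 0" using adm_facts(1,3)[OF Q] by (metis order.antisym)
    then show ?thesis using True by simp
  next
    case False
    then have T0: "?T y > 0" using adm_facts(4)[OF Q, of y] by simp
    obtain x0 where "Q y x0 \<noteq> 0"
      using False unfolding marg_def by (metis (no_types, lifting) sum.neutral)
    then have "P x0 * W x0 y > 0" using adm_facts(2)[OF Q] by simp
    then have g0: "?g y > 0" by (rule gg_pos)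
    have ls: "?T y * ln (?T y / ?g y) \<le> (\<Sum>x\<in>UNIV. if Q y x = 0 then 0 else Q y x * ln (Q y x / uu W P a x y))"
    proof -
      have "\<forall>x. 0 < Q y x \<longrightarrow> 0 < uu W P a x y"
      proof (intro allI impI)
        fix x assume "0 < Q y x"
        then have "P x * W x y > 0" using adm_facts(2)[OF Q, of y x] by simp
        then show "0 < uu W P a x y" by (rule uu_pos)
      qed
      then show ?thesis
        using log_sum[of UNIV "Q y" "\<lambda>x. uu W P a x y"] adm_facts(1)[OF Q] uu0 T0
        unfolding marg_def gg_def by auto
    qed
    have "(\<Sum>x\<in>UNIV. if Q y x = 0 then 0 else
       Q y x * (ln (?T y) + c * ln ((Q y x / ?T y) / uu W P a x y))) =
      (\<Sum>x\<in>UNIV. (1 - c) * ln (?T y) * Q y x + c * (if Q y x = 0 then 0 else Q y x * ln (Q y x / uu W P a x y)))"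
    proof (intro sum.cong refl)
      fix x
      show "(if Q y x = 0 then 0 else
       Q y x * (ln (?T y) + c * ln ((Q y x / ?T y) / uu W P a x y))) =
        (1 - c) * ln (?T y) * Q y x + c * (if Q y x = 0 then 0 else Q y x * ln (Q y x / uu W P a x y))"
      proof (cases "Q y x = 0")
        case True then show ?thesis by simp
      next
        case False
        then have f: "Q y x > 0" "P x > 0" "W x y > 0" using adm_facts(2)[OF Q] by auto
        then have u: "uu W P a x y > 0" using uu_pos by simp
        have e: "ln ((Q y x / ?T y) / uu W P a x y) = ln (Q y x / uu W P a x y) - ln (?T y)"
          using f T0 u by (simp add: ln_div ln_mult)
        show ?thesis unfolding e using False by (simp add: algebra_simps)
      qed
    qed
    also have "\<dots> = (1 - c) * ln (?T y) * ?T y + c * (\<Sum>x\<in>UNIV. if Q y x = 0 then 0 else Q y x * ln (Q y x / uu W P a x y))"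
      by (simp add: sum.distrib sum_distrib_left marg_def)
    finally have eq: "(\<Sum>x\<in>UNIV. if Q y x = 0 then 0 else
       Q y x * (ln (?T y) + c * ln ((Q y x / ?T y) / uu W P a x y))) = \<dots>" .
    have "?T y * ln (?T y / (?g y powr c)) = (1 - c) * ln (?T y) * ?T y + c * (?T y * ln (?T y / ?g y))"
      using T0 g0 by (simp add: ln_div ln_powr algebra_simps)
    also have "\<dots> \<le> (1 - c) * ln (?T y) * ?T y + c * (\<Sum>x\<in>UNIV. if Q y x = 0 then 0 else Q y x * ln (Q y x / uu W P a x y))"
      using ls c0 by (simp add: mult_left_mono)
    finally show ?thesis using False eq by simp
  qed
  have gp: "\<forall>y. ?T y > 0 \<longrightarrow> ?g y powr c > 0"
  proof (intro allI impI)
    fix y assume "?T y > 0"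
    then obtain x0 where "Q y x0 \<noteq> 0"
      unfolding marg_def by (metis (no_types, lifting) less_irrefl sum.neutral)
    then have "P x0 * W x0 y > 0" using adm_facts(2)[OF Q] by simp
    then have g0: "?g y > 0" by (rule gg_pos)
    then show "?g y powr c > 0" by simp
  qed
  have "- ln (ZZ W P a c) = (\<Sum>y\<in>UNIV. ?T y) * ln ((\<Sum>y\<in>UNIV. ?T y) / (\<Sum>y\<in>UNIV. ?g y powr c))"
    using adm_facts(5)[OF Q] by (simp add: ZZ_def ln_div)
  also have "\<dots> \<le> (\<Sum>y\<in>UNIV. if ?T y = 0 then 0 else ?T y * ln (?T y / (?g y powr c)))"
    by (rule log_sum) (use adm_facts(4,5)[OF Q] gp gg0 in auto)
  also have "\<dots> \<le> (\<Sum>y\<in>UNIV. \<Sum>x\<in>UNIV. if Q y x = 0 then 0 else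
       Q y x * (ln (?T y) + c * ln ((Q y x / ?T y) / uu W P a x y)))"
    by (rule sum_mono) (rule row)
  also have "\<dots> = divD W P Q - \<rho> * A_TV P Q + \<eta> * B_TV W Q"
    unfolding c_def by (rule comb[OF Q ae, symmetric])
  finally show ?thesis using c_def by simp
qed

lemma exists_pos: "\<exists>x y. P x * W x y > 0"
proof -
  have "\<exists>x. P x \<noteq> 0"
  proof (rule ccontr)
    assume "\<not> (\<exists>x. P x \<noteq> 0)"
    then have "(\<Sum>x\<in>UNIV. P x) = 0" by simp
    with dP show False by (simp add: distr_def)
  qed
  then obtain x0 where x0: "P x0 \<noteq> 0" by blast
  have "\<exists>y. W x0 y \<noteq> 0"
  proof (rule ccontr)
    assume "\<not> (\<exists>y. W x0 y \<noteq> 0)"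
    then have "(\<Sum>y\<in>UNIV. W x0 y) = 0" by simp
    with chW show False by (simp add: channel_def)
  qed
  then obtain y0 where y0: "W x0 y0 \<noteq> 0" by blast
  have "P x0 > 0" "W x0 y0 > 0" using x0 y0 P0[of x0] W0[of x0 y0] by auto
  then show ?thesis by (intro exI[of _ x0] exI[of _ y0]) simp
qed

lemma ZZ_pos: "ZZ W P a c > 0"
proof -
  obtain x0 y0 where "P x0 * W x0 y0 > 0" using exists_pos by blast
  then have "gg W P a y0 > 0" by (rule gg_pos)
  then have "gg W P a y0 powr c > 0" by simp
  moreover have "gg W P a y0 powr c \<le> ZZ W P a c"
    unfolding ZZ_def by (rule member_le_sum) auto
  ultimately show ?thesis by linarith
qed

lemma PW_cases: "P x * W x y = 0 \<or> P x * W x y > 0"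
proof -
  have "P x * W x y \<ge> 0" using P0[of x] W0[of x y] by simp
  then show ?thesis by auto
qed

lemma Qt_nonneg: "Qt W P a c y x \<ge> 0"
  unfolding Qt_def using ZZ_pos[of a c] gg0[of a y] uu0[of a x y] by simp

lemma Qt_pos_iff: "Qt W P a c y x > 0 \<longleftrightarrow> P x * W x y > 0"
proof
  assume "Qt W P a c y x > 0"
  then have "uu W P a x y \<noteq> 0" unfolding Qt_def by auto
  then have "P x \<noteq> 0" "W x y \<noteq> 0" unfolding uu_def by auto
  then show "P x * W x y > 0" using PW_cases[of x y] by auto
next
  assume h: "P x * W x y > 0"
  show "Qt W P a c y x > 0" unfolding Qt_def
    using gg_pos[OF h, of a] uu_pos[OF h, of a] ZZ_pos[of a c] by simp
qed

lemma Qt_zero_iff: "Qt W P a c y x = 0 \<longleftrightarrow> P x * W x y = 0"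
  using Qt_pos_iff[of a c y x] Qt_nonneg[of a c y x] PW_cases[of x y]
  by (smt (verit))

lemma marg_Qt: "marg (Qt W P a c) y = gg W P a y powr c / ZZ W P a c"
proof (cases "gg W P a y = 0")
  case True
  then show ?thesis unfolding marg_def Qt_def by simp
next
  case False
  have "marg (Qt W P a c) y = (gg W P a y powr c / ZZ W P a c) * ((\<Sum>x\<in>UNIV. uu W P a x y) / gg W P a y)"
    unfolding marg_def Qt_def by (simp add: sum_distrib_left sum_divide_distrib)
  also have "\<dots> = gg W P a y powr c / ZZ W P a c" using False unfolding gg_def by simp
  finally show ?thesis .
qed

lemma adm_Qt: "adm W P (Qt W P a c)"
proof -
  have "(\<Sum>y\<in>UNIV. \<Sum>x\<in>UNIV. Qt W P a c y x) = 1"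
  proof -
    have "(\<Sum>y\<in>UNIV. \<Sum>x\<in>UNIV. Qt W P a c y x) = (\<Sum>y\<in>UNIV. marg (Qt W P a c) y)"
      unfolding marg_def ..
    also have "\<dots> = (\<Sum>y\<in>UNIV. gg W P a y powr c) / ZZ W P a c"
      by (simp add: marg_Qt sum_divide_distrib)
    also have "\<dots> = 1" using ZZ_pos[of a c] unfolding ZZ_def by simp
    finally show ?thesis .
  qed
  then show ?thesis unfolding adm_def joint_distr_def using Qt_nonneg Qt_pos_iff by auto
qed

lemma Qt_value:
  assumes ae: "a * (1 - \<rho>) = 1 + \<eta>" and r1: "\<rho> < 1"
  shows "divD W P (Qt W P a (1 - \<rho>)) - \<rho> * A_TV P (Qt W P a (1 - \<rho>)) + \<eta> * B_TV W (Qt W P a (1 - \<rho>))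
     = - ln (ZZ W P a (1 - \<rho>))"
proof -
  define c where "c = 1 - \<rho>"
  have c0: "c > 0" using r1 c_def by simp
  let ?Q = "Qt W P a c"
  have "divD W P ?Q - \<rho> * A_TV P ?Q + \<eta> * B_TV W ?Q =
    (\<Sum>y\<in>UNIV. \<Sum>x\<in>UNIV. if ?Q y x = 0 then 0 else
       ?Q y x * (ln (marg ?Q y) + c * ln ((?Q y x / marg ?Q y) / uu W P a x y)))"
    unfolding c_def by (rule comb[OF adm_Qt ae])
  also have "\<dots> = (\<Sum>y\<in>UNIV. \<Sum>x\<in>UNIV. ?Q y x * (- ln (ZZ W P a c)))"
  proof (intro sum.cong refl)
    fix y x
    show "(if ?Q y x = 0 then 0 else
       ?Q y x * (ln (marg ?Q y) + c * ln ((?Q y x / marg ?Q y) / uu W P a x y))) =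
       ?Q y x * (- ln (ZZ W P a c))"
    proof (cases "?Q y x = 0")
      case True then show ?thesis by simp
    next
      case False
      then have h: "P x * W x y > 0" using Qt_zero_iff[of a c y x] PW_cases[of x y] by linarith
      have g: "gg W P a y > 0" using gg_pos[OF h] .
      have u: "uu W P a x y > 0" using uu_pos[OF h] .
      have Z: "ZZ W P a c > 0" by (rule ZZ_pos)
      have e1: "?Q y x / marg ?Q y / uu W P a x y = 1 / gg W P a y"
        unfolding marg_Qt Qt_def using g u Z by (simp add: field_simps)
      have e2: "ln (marg ?Q y) = c * ln (gg W P a y) - ln (ZZ W P a c)"
        unfolding marg_Qt using g Z by (simp add: ln_div ln_powr)
      show ?thesis unfolding e1 e2 using False g by (simp add: ln_div algebra_simps)
    qed
  qed
  also have "\<dots> = - ln (ZZ W P a c)"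
  proof -
    have "(\<Sum>y\<in>UNIV. \<Sum>x\<in>UNIV. ?Q y x * (- ln (ZZ W P a c))) = (\<Sum>y\<in>UNIV. \<Sum>x\<in>UNIV. ?Q y x) * (- ln (ZZ W P a c))"
      by (simp only: sum_distrib_right)
    then show ?thesis using adm_Qt[of a c] unfolding adm_def joint_distr_def by simp
  qed
  finally show ?thesis unfolding c_def .
qed

lemma A_nonneg:
  assumes Q: "adm W P Q"
  shows "A_TV P Q \<ge> 0"
  unfolding A_TV_def
proof (rule sum_nonneg)
  fix y
  show "0 \<le> (\<Sum>x\<in>UNIV. if Q y x = 0 then 0 else Q y x * ln (Q y x / marg Q y / P x))"
  proof (cases "marg Q y = 0")
    case True
    then have "\<forall>x. Q y x = 0" using adm_facts(1,3)[OF Q] by (metis order.antisym)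
    then show ?thesis by simp
  next
    case False
    then have T0: "marg Q y > 0" using adm_facts(4)[OF Q, of y] by simp
    have "\<forall>x. 0 < Q y x \<longrightarrow> 0 < marg Q y * P x"
      using adm_facts(2)[OF Q, of y] T0 by (auto intro!: mult_pos_pos)
    then have L: "(\<Sum>x\<in>UNIV. Q y x) * ln ((\<Sum>x\<in>UNIV. Q y x) / (\<Sum>x\<in>UNIV. marg Q y * P x))
      \<le> (\<Sum>x\<in>UNIV. if Q y x = 0 then 0 else Q y x * ln (Q y x / (marg Q y * P x)))"
      using log_sum[of UNIV "Q y" "\<lambda>x. marg Q y * P x"] adm_facts(1)[OF Q] P0 T0
      unfolding marg_def by auto
    have s1: "(\<Sum>x\<in>UNIV. marg Q y * P x) = marg Q y"
      using dP unfolding distr_def by (simp add: sum_distrib_left[symmetric])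
    have s2: "(\<Sum>x\<in>UNIV. Q y x) = marg Q y" unfolding marg_def ..
    have eqq: "\<And>x. Q y x / (marg Q y * P x) = Q y x / marg Q y / P x" by simp
    from L have "0 \<le> (\<Sum>x\<in>UNIV. if Q y x = 0 then 0 else Q y x * ln (Q y x / (marg Q y * P x)))"
      unfolding s1 s2 using T0 by simp
    then show ?thesis unfolding eqq .
  qed
qed

lemma B_nonneg:
  assumes Q: "adm W P Q"
  shows "B_TV W Q \<ge> 0"
  unfolding B_TV_def
proof (intro sum_nonneg)
  fix y x
  show "0 \<le> (if Q y x = 0 then 0 else Q y x * - ln (W x y))"
  proof (cases "Q y x = 0")
    case False
    then have "Q y x > 0" "W x y > 0" using adm_facts(2)[OF Q] by auto
    moreover have "- ln (W x y) \<ge> 0" using W1[of x y] \<open>W x y > 0\<close> by simp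
    ultimately show ?thesis using False mult_nonneg_nonneg[of "Q y x" "- ln (W x y)"] by simp
  qed simp
qed

lemma cont_uu:
  assumes "continuous_on S a" "\<forall>r\<in>S. a r > 0"
  shows "continuous_on S (\<lambda>r. uu W P (a r) x y)"
  unfolding uu_def
  by (intro continuous_intros continuous_on_powr') (use assms W0 in auto)

lemma cont_gg:
  assumes "continuous_on S a" "\<forall>r\<in>S. a r > 0"
  shows "continuous_on S (\<lambda>r. gg W P (a r) y)"
  unfolding gg_def by (intro continuous_on_sum ballI cont_uu assms)

lemma cont_ggc:
  assumes "continuous_on S a" "\<forall>r\<in>S. a r > 0" "continuous_on S c" "\<forall>r\<in>S. c r > 0"
  shows "continuous_on S (\<lambda>r. gg W P (a r) y powr c r)"
  by (intro continuous_on_powr' cont_gg assms) (use assms gg0 in auto)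

lemma cont_ZZ:
  assumes "continuous_on S a" "\<forall>r\<in>S. a r > 0" "continuous_on S c" "\<forall>r\<in>S. c r > 0"
  shows "continuous_on S (\<lambda>r. ZZ W P (a r) (c r))"
  unfolding ZZ_def by (intro continuous_on_sum ballI cont_ggc assms)

lemma cont_Qt:
  assumes "continuous_on S a" "\<forall>r\<in>S. a r > 0" "continuous_on S c" "\<forall>r\<in>S. c r > 0"
    and h: "P x * W x y > 0"
  shows "continuous_on S (\<lambda>r. Qt W P (a r) (c r) y x)"
    and "continuous_on S (\<lambda>r. marg (Qt W P (a r) (c r)) y)"
proof -
  have gne: "\<forall>r\<in>S. gg W P (a r) y \<noteq> 0" using gg_pos[OF h] by (simp add: less_le)
  have zne: "\<forall>r\<in>S. ZZ W P (a r) (c r) \<noteq> 0" using ZZ_pos by (simp add: less_le)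
  show "continuous_on S (\<lambda>r. Qt W P (a r) (c r) y x)"
    unfolding Qt_def
    by (intro continuous_intros cont_ggc cont_ZZ cont_gg cont_uu assms gne zne)
  show "continuous_on S (\<lambda>r. marg (Qt W P (a r) (c r)) y)"
    unfolding marg_Qt
    by (intro continuous_intros cont_ggc cont_ZZ assms zne)
qed

lemma cont_AB:
  assumes ac: "continuous_on S a" "\<forall>r\<in>S. a r > 0" "continuous_on S c" "\<forall>r\<in>S. c r > 0"
  shows "continuous_on S (\<lambda>r. A_TV P (Qt W P (a r) (c r)))"
    and "continuous_on S (\<lambda>r. B_TV W (Qt W P (a r) (c r)))"
proof -
  have eqA: "A_TV P (Qt W P (a r) (c r)) = (\<Sum>y\<in>UNIV. \<Sum>x\<in>UNIV. if P x * W x y = 0 then 0 else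
      Qt W P (a r) (c r) y x * ln (Qt W P (a r) (c r) y x / marg (Qt W P (a r) (c r)) y / P x))" for r
    unfolding A_TV_def Qt_zero_iff ..
  have eqB: "B_TV W (Qt W P (a r) (c r)) = (\<Sum>y\<in>UNIV. \<Sum>x\<in>UNIV. if P x * W x y = 0 then 0 else
      Qt W P (a r) (c r) y x * - ln (W x y))" for r
    unfolding B_TV_def Qt_zero_iff ..
  show "continuous_on S (\<lambda>r. A_TV P (Qt W P (a r) (c r)))"
    unfolding eqA
  proof (intro continuous_on_sum ballI)
    fix y x
    show "continuous_on S (\<lambda>r. if P x * W x y = 0 then 0 else
      Qt W P (a r) (c r) y x * ln (Qt W P (a r) (c r) y x / marg (Qt W P (a r) (c r)) y / P x))"
    proof (cases "P x * W x y = 0")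
      case True then show ?thesis by simp
    next
      case False
      then have h: "P x * W x y > 0" using PW_cases[of x y] by simp
      then have Px: "P x > 0" using P0[of x] W0[of x y] by (auto simp: zero_less_mult_iff)
      have qp: "\<forall>r\<in>S. Qt W P (a r) (c r) y x > 0" using Qt_pos_iff h by simp
      have mp: "\<forall>r\<in>S. marg (Qt W P (a r) (c r)) y > 0"
      proof
        fix r assume "r \<in> S"
        have "gg W P (a r) y > 0" using gg_pos[OF h] .
        then have "gg W P (a r) y powr c r > 0" by simp
        then show "marg (Qt W P (a r) (c r)) y > 0" unfolding marg_Qt using ZZ_pos by simp
      qed
      have "continuous_on S (\<lambda>r.
        Qt W P (a r) (c r) y x * ln (Qt W P (a r) (c r) y x / marg (Qt W P (a r) (c r)) y / P x))"
        by (intro continuous_intros cont_Qt[OF ac h]) (use qp mp Px in \<open>auto simp: less_le\<close>)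
      then show ?thesis using False by simp
    qed
  qed
  show "continuous_on S (\<lambda>r. B_TV W (Qt W P (a r) (c r)))"
    unfolding eqB
  proof (intro continuous_on_sum ballI)
    fix y x
    show "continuous_on S (\<lambda>r. if P x * W x y = 0 then 0 else Qt W P (a r) (c r) y x * - ln (W x y))"
    proof (cases "P x * W x y = 0")
      case True then show ?thesis by simp
    next
      case False
      then have h: "P x * W x y > 0" using PW_cases[of x y] by simp
      have "continuous_on S (\<lambda>r. Qt W P (a r) (c r) y x * - ln (W x y))"
        by (intro continuous_intros cont_Qt[OF ac h])
      then show ?thesis using False by simp
    qed
  qed
qed

lemma E0_eq:
  "E0 W (-\<rho>) (-(\<kappa> * \<rho>)) P = - ln (ZZ W P ((1 - \<kappa> * \<rho>) / (1 - \<rho>)) (1 - \<rho>))"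
  unfolding E0_def ZZ_def gg_def uu_def by simp

lemma pos_mult_le: "0 \<le> \<rho> \<Longrightarrow> \<rho> \<le> 1 \<Longrightarrow> \<rho> * t \<le> max 0 (t::real)"
proof (cases "t \<ge> 0")
  case True
  assume "0 \<le> \<rho>" "\<rho> \<le> 1"
  then have "\<rho> * t \<le> 1 * t" using True by (intro mult_right_mono) auto
  then show ?thesis by simp
next
  case False
  assume "0 \<le> \<rho>" "\<rho> \<le> 1"
  then have "\<rho> * t \<le> 0" using False by (simp add: mult_nonneg_nonpos)
  then show ?thesis by simp
qed

lemma weak_dual:
  assumes Q: "adm W P Q" and k: "0 \<le> \<kappa>" "\<kappa> \<le> 1" and r: "0 \<le> \<rho>" "\<rho> < 1"
  shows "E0 W (-\<rho>) (-(\<kappa> * \<rho>)) P + \<rho> * R' \<le>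
     divD W P Q + max 0 (R' - (A_TV P Q + \<kappa> * B_TV W Q))"
proof -
  define a where "a = (1 - \<kappa> * \<rho>) / (1 - \<rho>)"
  have ae: "a * (1 - \<rho>) = 1 + (-(\<kappa> * \<rho>))" unfolding a_def using r by simp
  have "E0 W (-\<rho>) (-(\<kappa> * \<rho>)) P \<le> divD W P Q - \<rho> * A_TV P Q + (-(\<kappa> * \<rho>)) * B_TV W Q"
    unfolding E0_eq a_def[symmetric] using gibbs_bound[OF Q ae r(2)] .
  moreover have "\<rho> * (R' - (A_TV P Q + \<kappa> * B_TV W Q)) \<le> max 0 (R' - (A_TV P Q + \<kappa> * B_TV W Q))"
    using r by (intro pos_mult_le) auto
  ultimately show ?thesis by (simp add: algebra_simps)
qed

lemma strong_dual:
  assumes k: "0 \<le> \<kappa>" "\<kappa> \<le> 1" and R': "R' > 0" and e: "\<epsilon> > 0"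
  shows "\<exists>Q. adm W P Q \<and> divD W P Q + max 0 (R' - (A_TV P Q + \<kappa> * B_TV W Q)) \<le>
     (SUP \<rho>\<in>{0..<1}. E0 W (-\<rho>) (-(\<kappa> * \<rho>)) P + \<rho> * R') + \<epsilon>"
proof -
  define a where "a = (\<lambda>\<rho>::real. (1 - \<kappa> * \<rho>) / (1 - \<rho>))"
  define c where "c = (\<lambda>\<rho>::real. 1 - \<rho>)"
  define Qr where "Qr = (\<lambda>\<rho>. Qt W P (a \<rho>) (c \<rho>))"
  define J where "J = (\<lambda>\<rho>. A_TV P (Qr \<rho>) + \<kappa> * B_TV W (Qr \<rho>))"
  define G where "G = (\<lambda>\<rho>. E0 W (-\<rho>) (-(\<kappa> * \<rho>)) P + \<rho> * R')"
  define S where "S = (SUP \<rho>\<in>{0..<1}. G \<rho>)"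
  have admQ: "adm W P (Qr \<rho>)" for \<rho> unfolding Qr_def by (rule adm_Qt)
  have bdd: "bdd_above (G ` {0..<1})"
    unfolding G_def using weak_dual[OF admQ[of 0] k] by (intro bdd_aboveI2) auto
  have GS: "G \<rho> \<le> S" if "\<rho> \<in> {0..<1}" for \<rho>
    unfolding S_def by (rule cSUP_upper[OF that bdd])
  have val: "divD W P (Qr \<rho>) + max 0 (R' - J \<rho>) = G \<rho> - \<rho> * R' + \<rho> * J \<rho> + max 0 (R' - J \<rho>)"
    if r: "0 \<le> \<rho>" "\<rho> < 1" for \<rho>
  proof -
    have ae: "a \<rho> * (1 - \<rho>) = 1 + (-(\<kappa> * \<rho>))" unfolding a_def using r by simp
    have "divD W P (Qr \<rho>) - \<rho> * A_TV P (Qr \<rho>) + (-(\<kappa> * \<rho>)) * B_TV W (Qr \<rho>) = - ln (ZZ W P (a \<rho>) (1 - \<rho>))"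
      unfolding Qr_def c_def by (rule Qt_value[OF ae r(2)])
    moreover have "G \<rho> = - ln (ZZ W P (a \<rho>) (1 - \<rho>)) + \<rho> * R'"
      unfolding G_def E0_eq a_def ..
    ultimately show ?thesis unfolding J_def by (simp add: algebra_simps)
  qed
  have Jnn: "J \<rho> \<ge> 0" for \<rho>
    unfolding J_def using A_nonneg[OF admQ] B_nonneg[OF admQ] k by simp
  show ?thesis
  proof (cases "\<exists>\<rho>1\<in>{0..<1}. J \<rho>1 \<ge> R'")
    case True
    then obtain \<rho>1 where r1: "0 \<le> \<rho>1" "\<rho>1 < 1" "J \<rho>1 \<ge> R'" by auto
    have "\<exists>\<rho>\<in>{0..<1}. J \<rho> \<ge> R' \<and> (\<rho> = 0 \<or> J \<rho> = R')"
    proof (cases "J 0 \<ge> R'")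
      case True then show ?thesis by auto
    next
      case False
      have cont: "continuous_on {0..\<rho>1} J"
      proof -
        have ca: "continuous_on {0..\<rho>1} a" unfolding a_def
          by (intro continuous_intros) (use r1 in auto)
        have apos: "\<forall>r\<in>{0..\<rho>1}. a r > 0"
        proof
          fix r assume "r \<in> {0..\<rho>1}"
          then have "0 \<le> r" "r < 1" using r1 by auto
          moreover have "\<kappa> * r \<le> r" using k \<open>0 \<le> r\<close> using mult_right_mono[of \<kappa> 1 r] by simp
          ultimately show "a r > 0" unfolding a_def by (intro divide_pos_pos) auto
        qed
        have cc: "continuous_on {0..\<rho>1} c" unfolding c_def by (intro continuous_intros)
        have cpos: "\<forall>r\<in>{0..\<rho>1}. c r > 0" unfolding c_def using r1 by auto
        show ?thesis unfolding J_def Qr_def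
          by (intro continuous_intros cont_AB[OF ca apos cc cpos])
      qed
      obtain \<rho> where "0 \<le> \<rho>" "\<rho> \<le> \<rho>1" "J \<rho> = R'"
        using IVT'[of J 0 R' \<rho>1, OF _ r1(3) r1(1) cont] False by auto
      then show ?thesis using r1 by auto
    qed
    then obtain \<rho> where r0: "\<rho> \<in> {0..<1}" "J \<rho> \<ge> R'" "\<rho> = 0 \<or> J \<rho> = R'" by blast
    then have r: "0 \<le> \<rho>" "\<rho> < 1" "J \<rho> \<ge> R'" "\<rho> = 0 \<or> J \<rho> = R'" by auto
    have "divD W P (Qr \<rho>) + max 0 (R' - J \<rho>) = G \<rho>"
      using val[OF r(1,2)] r(3,4) by auto
    also have "\<dots> \<le> S" using GS r by auto
    finally show ?thesis using admQ e unfolding J_def S_def G_def by (intro exI[of _ "Qr \<rho>"]) auto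
  next
    case False
    have lt: "J \<rho> < R'" if "0 \<le> \<rho>" "\<rho> < 1" for \<rho>
    proof -
      have "\<rho> \<in> {0..<1}" using that by simp
      then have "\<not> J \<rho> \<ge> R'" using False by blast
      then show ?thesis by simp
    qed
    define \<rho> where "\<rho> = max 0 (1 - \<epsilon> / R')"
    have r: "0 \<le> \<rho>" "\<rho> < 1" unfolding \<rho>_def using e R' by auto
    have "(1 - \<rho>) * R' \<le> \<epsilon>"
    proof -
      have "1 - \<rho> \<le> \<epsilon> / R'" unfolding \<rho>_def by simp
      then show ?thesis using R' by (simp add: field_simps)
    qed
    have "divD W P (Qr \<rho>) + max 0 (R' - J \<rho>) = G \<rho> + (1 - \<rho>) * (R' - J \<rho>)"
      using val[OF r] lt[OF r] by (simp add: algebra_simps)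
    also have "\<dots> \<le> S + (1 - \<rho>) * R'"
      using GS[of \<rho>] r Jnn[of \<rho>] mult_right_mono[of \<rho> 1 "J \<rho>"] by (simp add: algebra_simps)
    also have "\<dots> \<le> S + \<epsilon>" using \<open>(1 - \<rho>) * R' \<le> \<epsilon>\<close> by simp
    finally show ?thesis using admQ unfolding J_def S_def G_def by (intro exI[of _ "Qr \<rho>"]) auto
  qed
qed

end

lemma pos_split: "pos_part (R - A - pos_part (B - K)) =
   min (max 0 (R - (A + 0 * B))) (max 0 ((R + K) - (A + 1 * B)))"
  unfolding pos_part_def by (auto simp: max_def min_def)

theorem lemma9:
  fixes W :: "'x::finite \<Rightarrow> 'y::finite \<Rightarrow> real" and P :: "'x \<Rightarrow> real" and R K :: real
  assumes "channel W" and "distr P" and "R > 0" and "K > 0"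
  shows "Ec W P R K =
    min (SUP \<rho>\<in>{0..<1}. E0 W (-\<rho>) 0 P + \<rho> * R)
        (SUP \<rho>\<in>{0..<1}. E0 W (-\<rho>) (-\<rho>) P + \<rho> * (R + K))"
proof -
  note ch = assms(1) and dp = assms(2)
  define S1 where "S1 = (SUP \<rho>\<in>{0..<1}. E0 W (-\<rho>) (-(0 * \<rho>)) P + \<rho> * R)"
  define S2 where "S2 = (SUP \<rho>\<in>{0..<1}. E0 W (-\<rho>) (-(1 * \<rho>)) P + \<rho> * (R + K))"
  have S1': "(SUP \<rho>\<in>{0..<1}. E0 W (-\<rho>) 0 P + \<rho> * R) = S1" unfolding S1_def by simp
  have S2': "(SUP \<rho>\<in>{0..<1}. E0 W (-\<rho>) (-\<rho>) P + \<rho> * (R + K)) = S2" unfolding S2_def by simp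
  define V where "V = (\<lambda>Q. divD W P Q + pos_part (R - A_TV P Q - pos_part (B_TV W Q - K)))"
  define M where "M = {Q. joint_distr Q \<and> (\<forall>y x. Q y x > 0 \<longrightarrow> P x * W x y > 0)}"
  have M: "M = {Q. adm W P Q}" unfolding M_def adm_def ..
  have Ec: "Ec W P R K = (INF Q\<in>M. V Q)" unfolding Ec_def V_def M_def ..
  have Vsplit: "V Q = min (divD W P Q + max 0 (R - (A_TV P Q + 0 * B_TV W Q)))
      (divD W P Q + max 0 ((R + K) - (A_TV P Q + 1 * B_TV W Q)))" for Q
    unfolding V_def pos_split by simp
  have low1: "S1 \<le> divD W P Q + max 0 (R - (A_TV P Q + 0 * B_TV W Q))" if "adm W P Q" for Q
    unfolding S1_def
    by (rule cSUP_least) (use weak_dual[OF ch dp that, of 0] in auto)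
  have low2: "S2 \<le> divD W P Q + max 0 ((R + K) - (A_TV P Q + 1 * B_TV W Q))" if "adm W P Q" for Q
    unfolding S2_def
    by (rule cSUP_least) (use weak_dual[OF ch dp that, of 1] in auto)
  have low: "min S1 S2 \<le> V Q" if "Q \<in> M" for Q
    using low1[of Q] low2[of Q] that unfolding M Vsplit by auto
  have ne: "M \<noteq> {}" unfolding M using adm_Qt[OF ch dp] by blast
  have bdd: "bdd_below (V ` M)" using low by (intro bdd_belowI2) auto
  have ge: "min S1 S2 \<le> Ec W P R K" unfolding Ec by (rule cINF_greatest[OF ne low])
  have le1: "Ec W P R K \<le> S1"
  proof (rule field_le_epsilon)
    fix e :: real assume e: "e > 0"
    obtain Q where Q: "adm W P Q" "divD W P Q + max 0 (R - (A_TV P Q + 0 * B_TV W Q)) \<le> S1 + e"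
      using strong_dual[OF ch dp, of 0 R e] assms(3) e unfolding S1_def by auto
    have "Ec W P R K \<le> V Q" unfolding Ec by (rule cINF_lower[OF bdd]) (use Q M in auto)
    also have "\<dots> \<le> S1 + e" using Q(2) unfolding Vsplit by linarith
    finally show "Ec W P R K \<le> S1 + e" .
  qed
  have le2: "Ec W P R K \<le> S2"
  proof (rule field_le_epsilon)
    fix e :: real assume e: "e > 0"
    obtain Q where Q: "adm W P Q" "divD W P Q + max 0 ((R + K) - (A_TV P Q + 1 * B_TV W Q)) \<le> S2 + e"
      using strong_dual[OF ch dp, of 1 "R + K" e] assms(3,4) e unfolding S2_def by auto
    have "Ec W P R K \<le> V Q" unfolding Ec by (rule cINF_lower[OF bdd]) (use Q M in auto)
    also have "\<dots> \<le> S2 + e" using Q(2) unfolding Vsplit by linarith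
    finally show "Ec W P R K \<le> S2 + e" .
  qed
  show ?thesis unfolding S1' S2' using ge le1 le2 by linarith
qed

end
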